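(* Suppose that $A=\{a_1<a_2<\cdots<a_n\}$ is a set of integers with $a_1=1$ such that $A\oplus A\supseteq[k,k+m-1]$ for some integers $k$ and $m$. If $a_n\le m$, then $\mathcal M(n)\ge m-n$.
   Context: For a set $A$ of integers, $A\oplus A=\{a+b: a,b\in A,\ a\ne b\}$; $[x,y]$ denotes the set of integers $i$ with $x\le i\le y$, and $[m]=\{1,\dots,m\}$. An edge-magic labelling of a graph $G$ with $n$ vertices and $m'$ edges is a bijection $l:V(G)\cup E(G)\to[m'+n]$ such that $l(a)+l(b)+l(ab)$ is the same for all edges $ab$; $G$ is edge-magic if it admits one. $\mathcal M(n)$ denotes the maximum number of edges of an edge-magic graph with $n$ vertices. *)

theory Defs
  imports Main
begin

definition rsumset :: "int set \<Rightarrow> int set" where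
  "rsumset A = {a + b | a b. a \<in> A \<and> b \<in> A \<and> a \<noteq> b}"

definition simple_graph_edges :: "nat \<Rightarrow> nat set set \<Rightarrow> bool" where
  "simple_graph_edges n E \<longleftrightarrow> E \<subseteq> {e. e \<subseteq> {..<n} \<and> card e = 2}"

definition edge_magic_labelling :: "nat \<Rightarrow> nat set set \<Rightarrow> (nat + nat set \<Rightarrow> nat) \<Rightarrow> bool" where
  "edge_magic_labelling n E l \<longleftrightarrow>
     bij_betw l (Inl ` {..<n} \<union> Inr ` E) {1..card E + n} \<and>
     (\<exists>c. \<forall>a b. {a, b} \<in> E \<longrightarrow> l (Inl a) + l (Inl b) + l (Inr {a, b}) = c)"

definition edge_magic :: "nat \<Rightarrow> nat set set \<Rightarrow> bool" where
  "edge_magic n E \<longleftrightarrow> simple_graph_edges n E \<and> (\<exists>l. edge_magic_labelling n E l)"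

definition M :: "nat \<Rightarrow> nat" where
  "M n = Max {card E | E. edge_magic n E}"

end

theory Submission
  imports Defs
begin

lemma M_ge:
  assumes "edge_magic n E"
  shows "card E \<le> M n"
proof -
  have "{card E | E. edge_magic n E} \<subseteq> card ` Pow (Pow {..<n})"
    by (auto simp: edge_magic_def simple_graph_edges_def)
  hence fin: "finite {card E | E. edge_magic n E}"
    by (rule finite_subset) simp
  show ?thesis unfolding M_def using assms by (intro Max_ge[OF fin]) blast
qed

theorem lemma1:
  fixes A :: "int set" and k m :: int
  assumes "finite A"
    and "A \<noteq> {}"
    and "Min A = 1"
    and "{k..k + m - 1} \<subseteq> rsumset A"
    and "Max A \<le> m"
  shows "int (M (card A)) \<ge> m - int (card A)"
proof (cases "m < int (card A)")
  case True
  then show ?thesis by simp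
next
  case False
  define n where "n = card A"
  have Asub: "A \<subseteq> {1..m}"
  proof
    fix a assume "a \<in> A"
    then have "Min A \<le> a" "a \<le> Max A" using assms(1) by auto
    then show "a \<in> {1..m}" using assms(3,5) by auto
  qed
  obtain f where f: "bij_betw f {0..<n} A"
    using ex_bij_betw_nat_finite[OF assms(1)] n_def by blast
  have fb: "bij_betw f {..<n} A" using f by (simp add: atLeast0LessThan)
  define g where "g = inv_into {..<n} f"
  have g1: "g a < n" "f (g a) = a" if "a \<in> A" for a
    using that fb unfolding g_def
    by (auto simp: bij_betw_def inv_into_into f_inv_into_f)
  have ginj: "g a = g b \<Longrightarrow> a \<in> A \<Longrightarrow> b \<in> A \<Longrightarrow> a = b" for a b
    using g1 by metis
  define S where "S = {1..m} - A"
  have ex: "\<forall>x\<in>S. \<exists>q. fst q \<in> A \<and> snd q \<in> A \<and> fst q \<noteq> snd q \<and> fst q + snd q = k + m - x"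
  proof
    fix x assume "x \<in> S"
    then have "k + m - x \<in> {k..k + m - 1}" unfolding S_def by auto
    then have "k + m - x \<in> rsumset A" using assms(4) by blast
    then obtain a b where ab: "a \<in> A" "b \<in> A" "a \<noteq> b" "a + b = k + m - x"
      unfolding rsumset_def mem_Collect_eq by (elim exE conjE) metis
    show "\<exists>q. fst q \<in> A \<and> snd q \<in> A \<and> fst q \<noteq> snd q \<and> fst q + snd q = k + m - x"
      by (rule exI[of _ "(a,b)"]) (simp add: ab)
  qed
  obtain p where p: "\<And>x. x \<in> S \<Longrightarrow> fst (p x) \<in> A \<and> snd (p x) \<in> A \<and> fst (p x) \<noteq> snd (p x) \<and> fst (p x) + snd (p x) = k + m - x"
    using bchoice[OF ex] by blast
  define edge where "edge x = {g (fst (p x)), g (snd (p x))}" for x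
  have gne: "g (fst (p x)) \<noteq> g (snd (p x))" if "x \<in> S" for x
    using p[OF that] ginj by blast
  have sumedge: "sum f (edge x) = k + m - x" if "x \<in> S" for x
    using p[OF that] gne[OF that] g1 unfolding edge_def by auto
  have cardedge: "card (edge x) = 2" if "x \<in> S" for x
    using gne[OF that] unfolding edge_def by auto
  have edgesub: "edge x \<subseteq> {..<n}" if "x \<in> S" for x
    using p[OF that] g1 unfolding edge_def by auto
  define E where "E = edge ` S"
  have injE: "inj_on edge S"
  proof (rule inj_onI)
    fix x y assume "x \<in> S" "y \<in> S" "edge x = edge y"
    then have "k + m - x = k + m - y" using sumedge by metis
    then show "x = y" by simp
  qed
  have finS: "finite S" unfolding S_def by simp
  have cardS: "card S = nat m - n"
    unfolding S_def n_def using card_Diff_subset[OF assms(1) Asub] by simp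
  have cardE: "card E = card S" unfolding E_def using card_image[OF injE] .
  have sg: "simple_graph_edges n E"
    unfolding simple_graph_edges_def E_def using edgesub cardedge by auto
  define l where "l = (\<lambda>v. case v of Inl i \<Rightarrow> nat (f i) | Inr e \<Rightarrow> nat (k + m - sum f e))"
  have nm: "n \<le> nat m" using False n_def by simp
  have cE: "card E + n = nat m" using cardE cardS nm by simp
  have Apos: "a \<in> A \<Longrightarrow> a \<ge> 1" for a using Asub by auto
  have img1: "l ` (Inl ` {..<n}) = nat ` A"
  proof -
    have "l ` (Inl ` {..<n}) = (\<lambda>i. nat (f i)) ` {..<n}"
      unfolding l_def by (auto simp: image_image)
    also have "\<dots> = nat ` (f ` {..<n})" by (simp add: image_image)
    also have "\<dots> = nat ` A" using fb by (simp add: bij_betw_def)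
    finally show ?thesis .
  qed
  have img2: "l ` (Inr ` E) = nat ` S"
  proof -
    have "l ` (Inr ` E) = (\<lambda>x. nat (k + m - sum f (edge x))) ` S"
      unfolding l_def E_def by (auto simp: image_image)
    also have "\<dots> = nat ` S" using sumedge by (intro image_cong) auto
    finally show ?thesis .
  qed
  have "nat ` A \<union> nat ` S = nat ` {1..m}"
    using Asub unfolding S_def by auto
  also have "\<dots> = {1..nat m}"
  proof
    show "nat ` {1..m} \<subseteq> {1..nat m}" by auto
    show "{1..nat m} \<subseteq> nat ` {1..m}"
    proof
      fix y assume "y \<in> {1..nat m}"
      then have "int y \<in> {1..m}" by auto
      then show "y \<in> nat ` {1..m}" by (intro image_eqI[of _ _ "int y"]) auto
    qed
  qed
  finally have imgall: "l ` (Inl ` {..<n} \<union> Inr ` E) = {1..card E + n}"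
    using img1 img2 cE by (simp add: image_Un)
  have cdom: "card (Inl ` {..<n} \<union> Inr ` E) = card E + n"
  proof -
    have "finite E" unfolding E_def using finS by simp
    then have "card (Inl ` {..<n} \<union> Inr ` E) = card (Inl ` {..<n} :: (nat + nat set) set) + card (Inr ` E :: (nat + nat set) set)"
      by (intro card_Un_disjoint) auto
    also have "\<dots> = n + card E" by (simp add: card_image)
    finally show ?thesis by simp
  qed
  have "finite (Inl ` {..<n} \<union> Inr ` E :: (nat + nat set) set)"
    unfolding E_def using finS by simp
  then have "inj_on l (Inl ` {..<n} \<union> Inr ` E)"
    using imgall cdom by (simp add: inj_on_iff_eq_card)
  then have bij: "bij_betw l (Inl ` {..<n} \<union> Inr ` E) {1..card E + n}"
    using imgall by (simp add: bij_betw_def)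
  have magic: "\<forall>a b. {a, b} \<in> E \<longrightarrow> l (Inl a) + l (Inl b) + l (Inr {a, b}) = nat (k + m)"
  proof (intro allI impI)
    fix a b assume ab: "{a, b} \<in> E"
    then obtain x where x: "x \<in> S" "{a, b} = edge x" unfolding E_def by auto
    have c2: "card {a, b} = 2" using cardedge[OF x(1)] x(2) by simp
    have "a \<noteq> b"
    proof
      assume "a = b" then show False using c2 by simp
    qed
    then have sab: "sum f {a, b} = f a + f b" by simp
    have "a < n" "b < n" using edgesub[OF x(1)] x(2) by auto
    then have "f a \<in> A" "f b \<in> A" using fb by (auto simp: bij_betw_def)
    then have "f a \<ge> 1" "f b \<ge> 1" using Apos by auto
    moreover have "k + m - sum f {a,b} = x" using sumedge[OF x(1)] x(2) by simp
    moreover have "x \<ge> 1" using x(1) unfolding S_def by auto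
    ultimately show "l (Inl a) + l (Inl b) + l (Inr {a, b}) = nat (k + m)"
      unfolding l_def using sab by simp
  qed
  have "edge_magic n E"
    unfolding edge_magic_def edge_magic_labelling_def using sg bij magic by blast
  then have "card E \<le> M n" by (rule M_ge)
  then show ?thesis using cardE cardS nm n_def False by simp
qed

end
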